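(* Let $J$ be a finite nonempty index set, $\alpha\in(0,1/4]$, $D\ge0$, and let $T$ be a positive integer with $\alpha^2T\ge\ln(|J|+2.5\,T D|J|)$. Let $w^1\in\mathbb R^J$ have $w^1_j=1$ for all $j$. Suppose that for $i=1,\dots,T$ we are given (possibly depending on everything before) vectors $g^i,\tilde w^i\in\mathbb R^J$ satisfying $\|g^i\|_\infty\le2$, $\|w^i-\tilde w^i\|_\infty\le D$, and $\langle g^i,\tilde w^i\rangle\le0$, and we set $w^{i+1}_j=w^i_j(1+\alpha g^i_j)$ for all $j\in J$. Then $\frac1T\sum_{i=1}^T g^i_j\le5\alpha$ for every $j\in J$. *)

theory Defs
  imports Complex_Main
begin

end

theory Submission
  imports Defs
begin

lemma ln_lb_neg:
  fixes x :: real
  assumes a: "-1/2 \<le> x" and b: "x \<le> 0"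
  shows "x - x\<^sup>2 \<le> ln (1 + x)"
proof -
  let ?f = "\<lambda>t::real. ln (1 + t) - t + t\<^sup>2"
  have "?f 0 \<le> ?f x"
  proof (rule DERIV_nonpos_imp_nonincreasing[of x 0 ?f])
    show "x \<le> 0" by fact
    fix t :: real assume t0: "x \<le> t" "t \<le> 0"
    then have t: "x \<le> t \<and> t \<le> 0" by simp
    show "\<exists>y. DERIV ?f t :> y \<and> y \<le> 0"
    proof -
      have pos: "1 + t > 0" using t a by simp
      have "DERIV ?f t :> (1 / (1 + t) - 1 + 2 * t)"
        using pos by (auto intro!: derivative_eq_intros)
      moreover have "1 / (1 + t) - 1 + 2 * t \<le> 0"
      proof -
        have "1 / (1 + t) - 1 + 2 * t = t * (1 + 2*t) / (1 + t)"
          using pos by (simp add: field_simps)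
        moreover have "t * (1 + 2*t) \<le> 0"
          using t a by (intro mult_nonpos_nonneg) auto
        ultimately show ?thesis using pos by (simp add: divide_nonpos_pos)
      qed
      ultimately show "\<exists>y. DERIV ?f t :> y \<and> y \<le> 0" by blast
    qed
  qed
  then show ?thesis by simp
qed

lemma ln_lb:
  fixes x :: real
  assumes "\<bar>x\<bar> \<le> 1/2"
  shows "x - x\<^sup>2 \<le> ln (1 + x)"
  using assms ln_lb_neg[of x] ln_one_plus_pos_lower_bound[of x] by (cases "x \<ge> 0") auto

theorem theorem2p3:
  fixes J :: "'a set" and \<alpha> D :: real and T :: nat
    and g wt w :: "nat \<Rightarrow> 'a \<Rightarrow> real"
  assumes "finite J" and "J \<noteq> {}"
    and "0 < \<alpha>" and "\<alpha> \<le> 1/4" and "D \<ge> 0" and "T \<ge> 1"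
    and "\<alpha>^2 * real T \<ge> ln (real (card J) + 2.5 * real T * D * real (card J))"
    and "\<forall>j\<in>J. w 1 j = 1"
    and "\<forall>i\<in>{1..T}. \<forall>j\<in>J. w (i + 1) j = w i j * (1 + \<alpha> * g i j)"
    and "\<forall>i\<in>{1..T}. \<forall>j\<in>J. \<bar>g i j\<bar> \<le> 2"
    and "\<forall>i\<in>{1..T}. \<forall>j\<in>J. \<bar>w i j - wt i j\<bar> \<le> D"
    and "\<forall>i\<in>{1..T}. (\<Sum>j\<in>J. g i j * wt i j) \<le> 0"
  shows "\<forall>j\<in>J. (1 / real T) * (\<Sum>i=1..T. g i j) \<le> 5 * \<alpha>"
proof
  note fin = assms(1) and a0 = assms(3) and a4 = assms(4) and D0 = assms(5) and T1 = assms(6)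
    and hT = assms(7) and w1 = assms(8) and rec = assms(9) and gb = assms(10)
    and wd = assms(11) and gw = assms(12)
  have abs_ag: "\<bar>\<alpha> * g i j\<bar> \<le> 1/4 * 2" if "i \<in> {1..T}" "j \<in> J" for i j
  proof -
    have "\<bar>\<alpha> * g i j\<bar> = \<alpha> * \<bar>g i j\<bar>" using a0 by (simp add: abs_mult)
    also have "\<dots> \<le> 1/4 * 2" using gb that a0 a4 by (intro mult_mono) auto
    finally show ?thesis .
  qed
  have step_pos: "1 + \<alpha> * g i j \<ge> 1/2" if "i \<in> {1..T}" "j \<in> J" for i j
  proof -
    have "\<bar>\<alpha> * g i j\<bar> \<le> 1/4 * 2" using abs_ag that by blast
    then show ?thesis by linarith
  qed
  have pos: "\<forall>j\<in>J. w (k+1) j > 0" if "k \<le> T" for k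
    using that
  proof (induction k)
    case 0 then show ?case using w1 by simp
  next
    case (Suc k)
    show ?case
    proof
      fix j assume j: "j \<in> J"
      have k1: "Suc k \<in> {1..T}" using Suc.prems by simp
      have "w (Suc k + 1) j = w (k+1) j * (1 + \<alpha> * g (Suc k) j)"
        using rec k1 j by simp
      moreover have "w (k+1) j > 0" using Suc j by simp
      moreover have "1 + \<alpha> * g (Suc k) j > 0" using step_pos[OF k1 j] by simp
      ultimately show "w (Suc k + 1) j > 0" by simp
    qed
  qed
  define \<Phi> where "\<Phi> i = (\<Sum>j\<in>J. w i j)" for i
  have phi: "\<Phi> (k+1) \<le> card J + 2 * \<alpha> * D * k * card J" if "k \<le> T" for k
    using that
  proof (induction k)
    case 0 then show ?case using w1 by (simp add: \<Phi>_def)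
  next
    case (Suc k)
    have k1: "Suc k \<in> {1..T}" using Suc.prems by simp
    let ?i = "Suc k"
    have "\<Phi> (?i + 1) = (\<Sum>j\<in>J. w ?i j * (1 + \<alpha> * g ?i j))"
      unfolding \<Phi>_def using rec k1 by (intro sum.cong) auto
    also have "\<dots> = \<Phi> ?i + \<alpha> * (\<Sum>j\<in>J. g ?i j * w ?i j)"
      by (simp add: \<Phi>_def algebra_simps sum.distrib sum_distrib_left)
    also have "(\<Sum>j\<in>J. g ?i j * w ?i j) = (\<Sum>j\<in>J. g ?i j * wt ?i j) + (\<Sum>j\<in>J. g ?i j * (w ?i j - wt ?i j))"
      by (simp add: algebra_simps sum.distrib[symmetric])
    also have "(\<Sum>j\<in>J. g ?i j * (w ?i j - wt ?i j)) \<le> (\<Sum>j\<in>J. 2 * D)"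
    proof (rule sum_mono)
      fix j assume j: "j \<in> J"
      have "g ?i j * (w ?i j - wt ?i j) \<le> \<bar>g ?i j\<bar> * \<bar>w ?i j - wt ?i j\<bar>"
        by (metis abs_ge_self abs_mult)
      also have "\<dots> \<le> 2 * D"
        using gb wd k1 j by (intro mult_mono) auto
      finally show "g ?i j * (w ?i j - wt ?i j) \<le> 2 * D" .
    qed
    hence "\<Phi> ?i + \<alpha> * ((\<Sum>j\<in>J. g ?i j * wt ?i j) + (\<Sum>j\<in>J. g ?i j * (w ?i j - wt ?i j)))
        \<le> \<Phi> ?i + \<alpha> * (0 + 2 * D * card J)"
      using gw k1 a0 by (intro add_left_mono mult_left_mono add_mono) (auto simp: mult.commute)
    also have "\<dots> \<le> card J + 2 * \<alpha> * D * k * card J + \<alpha> * (2 * D * card J)"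
      using Suc by simp
    also have "\<dots> = card J + 2 * \<alpha> * D * real (Suc k) * card J"
      by (simp add: algebra_simps)
    finally show ?case by simp
  qed
  fix j assume j: "j \<in> J"
  have lnw: "\<alpha> * (\<Sum>i=1..k. g i j) - 4 * \<alpha>\<^sup>2 * k \<le> ln (w (k+1) j)" if "k \<le> T" for k
    using that
  proof (induction k)
    case 0 then show ?case using w1 j by simp
  next
    case (Suc k)
    have k1: "Suc k \<in> {1..T}" using Suc.prems by simp
    let ?i = "Suc k"
    have wpos: "w (k+1) j > 0" using pos[of k] Suc.prems j by simp
    have fpos: "1 + \<alpha> * g ?i j > 0" using step_pos[OF k1 j] by simp
    have ab: "\<bar>\<alpha> * g ?i j\<bar> \<le> 1/2"
    proof -
      have "\<bar>\<alpha> * g ?i j\<bar> \<le> 1/4 * 2"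
        using abs_ag k1 j by blast
      then show ?thesis by simp
    qed
    have sq: "(\<alpha> * g ?i j)\<^sup>2 \<le> 4 * \<alpha>\<^sup>2"
    proof -
      have "(g ?i j)\<^sup>2 \<le> 2\<^sup>2"
        using gb k1 j by (metis abs_le_square_iff abs_numeral)
      then show ?thesis using a0 by (simp add: power_mult_distrib mult_left_mono)
    qed
    have "ln (w (?i+1) j) = ln (w (k+1) j) + ln (1 + \<alpha> * g ?i j)"
      using rec k1 j wpos fpos by (simp add: ln_mult)
    moreover have "\<alpha> * g ?i j - 4 * \<alpha>\<^sup>2 \<le> ln (1 + \<alpha> * g ?i j)"
      using ln_lb[OF ab] sq by linarith
    moreover have "(\<Sum>i=1..Suc k. g i j) = (\<Sum>i=1..k. g i j) + g ?i j"
      by simp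
    ultimately show ?case using Suc by (simp add: algebra_simps)
  qed
  have "ln (w (T+1) j) \<le> ln (\<Phi> (T+1))"
  proof -
    have "w (T+1) j \<le> \<Phi> (T+1)"
      unfolding \<Phi>_def using pos[of T] fin j
      by (intro member_le_sum) (auto intro: less_imp_le)
    then show ?thesis using pos[of T] j by (intro ln_mono) auto
  qed
  also have "\<dots> \<le> ln (real (card J) + 2.5 * real T * D * real (card J))"
  proof -
    have "\<Phi> (T+1) > 0" unfolding \<Phi>_def using pos[of T] fin j assms(2)
      by (intro sum_pos) auto
    moreover have "2 * \<alpha> * D * T * card J \<le> 2.5 * real T * D * real (card J)"
    proof -
      have "0 \<le> D * T * card J" using D0 by simp
      then have "2 * \<alpha> * (D * T * card J) \<le> 2.5 * (D * T * card J)"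
        using a4 by (intro mult_right_mono) auto
      then show ?thesis by (simp add: algebra_simps)
    qed
    ultimately show ?thesis using phi[of T] by simp
  qed
  also have "\<dots> \<le> \<alpha>\<^sup>2 * T" using hT by simp
  finally have "\<alpha> * (\<Sum>i=1..T. g i j) \<le> 5 * \<alpha>\<^sup>2 * T"
    using lnw[of T] by simp
  hence "\<alpha> * (\<Sum>i=1..T. g i j) \<le> \<alpha> * (5 * \<alpha> * T)"
    by (simp add: power2_eq_square algebra_simps)
  hence "(\<Sum>i=1..T. g i j) \<le> 5 * \<alpha> * T" using a0 by simp
  then show "(1 / real T) * (\<Sum>i=1..T. g i j) \<le> 5 * \<alpha>"
    using T1 by (simp add: field_simps)
qed

end
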